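(* Fix $l,r>0$, $0<\alpha<\beta<1$ and $Q_0\in\mathbb{R}$. Let $A^*\in(0,A_M)$ be the point with $B(A^* )=A^*$ and set $B^*=B(A^* )$; let $\hat A\in(0,A_M)$ be the point with $N(\hat A)=0$ and set $\hat B=B(\hat A)$. Then: (i) if $l<r$ then $l<\hat A<A^*=B^*<\hat B<r$; (ii) if $l>r$ then $l>\hat A>A^*=B^*>\hat B>r$; (iii) if $l=r$ then $\hat A=\hat B=A^*=B^*=l=r$.
   Context: For $A\in(0,A_M)$, where $A_M=l+\frac{\alpha}{1-\beta}r$, define $B=B(A)=\frac{1-\beta}{\alpha}(l-A)+r$ (so $B>0$ on this interval), $S_a=\sqrt{Q_0^2+A^2}$, $S_b=\sqrt{Q_0^2+B^2}$ and $N=N(A)=A-l+S_a-S_b$. (Here $A,B$ represent geometric means of the two ion concentrations at the points $x=a$ and $x=b$ in a zero-current Poisson–Nernst–Planck model with boundary concentrations $l,r$, permanent charge $2Q_0$ on $(a,b)$, and $\alpha=H(a)/H(1)$, $\beta=H(b)/H(1)$, $H(x)=\int_0^x ds/h(s)$.) The function $B(A)-A$ is strictly decreasing, positive near $0^+$ and negative near $A_M^-$, so $A^*$ exists uniquely; $N$ is strictly increasing in $A$ with $N(0^+)<0<N(A_M^-)$, so $\hat A$ exists uniquely. *)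

theory Defs
  imports Complex_Main
begin

definition A_M :: "real \<Rightarrow> real \<Rightarrow> real \<Rightarrow> real \<Rightarrow> real" where
  "A_M l r \<alpha> \<beta> = l + \<alpha> / (1 - \<beta>) * r"

definition Bfun :: "real \<Rightarrow> real \<Rightarrow> real \<Rightarrow> real \<Rightarrow> real \<Rightarrow> real" where
  "Bfun l r \<alpha> \<beta> A = (1 - \<beta>) / \<alpha> * (l - A) + r"

definition Nfun :: "real \<Rightarrow> real \<Rightarrow> real \<Rightarrow> real \<Rightarrow> real \<Rightarrow> real \<Rightarrow> real" where
  "Nfun l r \<alpha> \<beta> Q0 A = A - l + sqrt (Q0^2 + A^2) - sqrt (Q0^2 + (Bfun l r \<alpha> \<beta> A)^2)"

end

theory Submission
  imports Defs
begin

lemma sq_mono_strict: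
  fixes x y Q :: real
  assumes "0 \<le> x" "x < y"
  shows "sqrt (Q^2 + x^2) < sqrt (Q^2 + y^2)"
proof -
  have "x^2 < y^2" using assms by (simp add: power_strict_mono)
  then show ?thesis by simp
qed

lemma sq_mono:
  fixes x y Q :: real
  assumes "0 \<le> x" "x \<le> y"
  shows "sqrt (Q^2 + x^2) \<le> sqrt (Q^2 + y^2)"
proof -
  have "x^2 \<le> y^2" using assms by (simp add: power_mono)
  then show ?thesis by simp
qed

theorem lemma3p10:
  fixes l r \<alpha> \<beta> Q0 Astar Ahat :: real
  assumes "l > 0" and "r > 0" and "0 < \<alpha>" and "\<alpha> < \<beta>" and "\<beta> < 1"
    and "0 < Astar" and "Astar < A_M l r \<alpha> \<beta>" and "Bfun l r \<alpha> \<beta> Astar = Astar"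
    and "0 < Ahat" and "Ahat < A_M l r \<alpha> \<beta>" and "Nfun l r \<alpha> \<beta> Q0 Ahat = 0"
  shows "(l < r \<longrightarrow> l < Ahat \<and> Ahat < Astar \<and> Astar = Bfun l r \<alpha> \<beta> Astar
              \<and> Bfun l r \<alpha> \<beta> Astar < Bfun l r \<alpha> \<beta> Ahat \<and> Bfun l r \<alpha> \<beta> Ahat < r)
       \<and> (l > r \<longrightarrow> l > Ahat \<and> Ahat > Astar \<and> Astar = Bfun l r \<alpha> \<beta> Astar
              \<and> Bfun l r \<alpha> \<beta> Astar > Bfun l r \<alpha> \<beta> Ahat \<and> Bfun l r \<alpha> \<beta> Ahat > r)
       \<and> (l = r \<longrightarrow> Ahat = Bfun l r \<alpha> \<beta> Ahat \<and> Bfun l r \<alpha> \<beta> Ahat = Astar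
              \<and> Astar = Bfun l r \<alpha> \<beta> Astar \<and> Bfun l r \<alpha> \<beta> Astar = l \<and> l = r)"
proof -
  define k where "k = (1 - \<beta>) / \<alpha>"
  define B where "B = (\<lambda>A. k * (l - A) + r)"
  define f where "f = (\<lambda>x::real. sqrt (Q0^2 + x^2))"
  have k0: "k > 0" using assms unfolding k_def by simp
  have Bf: "\<And>A. Bfun l r \<alpha> \<beta> A = B A" unfolding B_def k_def Bfun_def by simp
  have AM: "k * (A_M l r \<alpha> \<beta> - l) = r" unfolding k_def A_M_def using assms by (simp add: field_simps)
  have Bpos: "\<And>A. A < A_M l r \<alpha> \<beta> \<Longrightarrow> B A > 0"
  proof -
    fix A assume "A < A_M l r \<alpha> \<beta>"
    then have "k * (A_M l r \<alpha> \<beta> - A) > 0" using k0 by simp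
    moreover have "B A = k * (A_M l r \<alpha> \<beta> - A)" unfolding B_def using AM by (simp add: algebra_simps)
    ultimately show "B A > 0" by simp
  qed
  have Bmono: "\<And>x y. x < y \<Longrightarrow> B y < B x" unfolding B_def using k0 by (simp add: mult_strict_left_mono)
  have Bl: "B l = r" unfolding B_def by simp
  have N: "Ahat - l + f Ahat - f (B Ahat) = 0" using assms(11) unfolding Nfun_def f_def Bf by simp
  have fs: "\<And>x y. 0 \<le> x \<Longrightarrow> x < y \<Longrightarrow> f x < f y" unfolding f_def by (rule sq_mono_strict)
  have fm: "\<And>x y. 0 \<le> x \<Longrightarrow> x \<le> y \<Longrightarrow> f x \<le> f y" unfolding f_def by (rule sq_mono)
  have BAh: "B Ahat > 0" using Bpos assms(10) by simp
  have BAs: "B Astar = Astar" using assms(8) Bf by simp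
  have c1: "l < Ahat" if "l \<le> r" "l \<noteq> r \<or> Ahat \<noteq> l" for dummy :: bool
  proof (rule ccontr)
    assume "\<not> l < Ahat"
    then have h: "Ahat \<le> l" by simp
    have "r \<le> B Ahat"
    proof (cases "Ahat = l")
      case True then show ?thesis using Bl by simp
    next
      case False then show ?thesis using Bmono[of Ahat l] h Bl by simp
    qed
    then have "Ahat < B Ahat"
      using that h by (cases "Ahat = l") auto
    then have "f Ahat < f (B Ahat)" using fs assms(9) by simp
    then show False using N h by simp
  qed
  have c2: "Ahat < l" if "r \<le> l" "l \<noteq> r \<or> Ahat \<noteq> l" for dummy :: bool
  proof (rule ccontr)
    assume "\<not> Ahat < l"
    then have h: "l \<le> Ahat" by simp
    have "B Ahat \<le> r"
    proof (cases "Ahat = l")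
      case True then show ?thesis using Bl by simp
    next
      case False then show ?thesis using Bmono[of l Ahat] h Bl by simp
    qed
    then have "B Ahat < Ahat"
      using that h by (cases "Ahat = l") auto
    then have "f (B Ahat) < f Ahat" using fs BAh by simp
    then show False using N h by simp
  qed
  have d1: "Ahat < Astar" if "l < Ahat" for dummy :: bool
  proof (rule ccontr)
    assume "\<not> Ahat < Astar"
    then have "B Ahat \<le> B Astar" using Bmono[of Astar Ahat] by (cases "Ahat = Astar") auto
    then have "B Ahat \<le> Ahat" using BAs \<open>\<not> Ahat < Astar\<close> by simp
    then have "f (B Ahat) \<le> f Ahat" using fm BAh by simp
    then show False using N that by simp
  qed
  have d2: "Astar < Ahat" if "Ahat < l" for dummy :: bool
  proof (rule ccontr)
    assume "\<not> Astar < Ahat"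
    then have "B Astar \<le> B Ahat" using Bmono[of Ahat Astar] by (cases "Ahat = Astar") auto
    then have "Ahat \<le> B Ahat" using BAs \<open>\<not> Astar < Ahat\<close> by simp
    then have "f Ahat \<le> f (B Ahat)" using fm assms(9) by simp
    then show False using N that by simp
  qed
  show ?thesis
  proof (intro conjI impI)
    assume lr: "l < r"
    have a: "l < Ahat" using c1[OF _ ] lr by auto
    have b: "Ahat < Astar" using d1 a by auto
    show "l < Ahat" by (fact a)
    show "Ahat < Astar" by (fact b)
    show "Astar = Bfun l r \<alpha> \<beta> Astar" using assms(8) by simp
    show "Bfun l r \<alpha> \<beta> Astar < Bfun l r \<alpha> \<beta> Ahat" using Bf Bmono b by simp
    show "Bfun l r \<alpha> \<beta> Ahat < r" using Bf Bmono a Bl by metis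
  next
    assume lr: "r < l"
    have a: "Ahat < l" using c2 lr by auto
    have b: "Astar < Ahat" using d2 a by auto
    show "Ahat < l" by (fact a)
    show "Astar < Ahat" by (fact b)
    show "Astar = Bfun l r \<alpha> \<beta> Astar" using assms(8) by simp
    show "Bfun l r \<alpha> \<beta> Ahat < Bfun l r \<alpha> \<beta> Astar" using Bf Bmono b by simp
    show "r < Bfun l r \<alpha> \<beta> Ahat" using Bf Bmono a Bl by metis
  next
    assume lr: "l = r"
    have a: "Ahat = l" using c1 c2 lr by fastforce
    have s: "Astar = l"
    proof -
      have "k * (l - Astar) + l = Astar" using BAs lr unfolding B_def by simp
      then have "(k + 1) * (l - Astar) = 0" by (simp add: algebra_simps)
      then show ?thesis using k0 by simp
    qed
    show "Ahat = Bfun l r \<alpha> \<beta> Ahat" using a Bf Bl lr by simp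
    show "Bfun l r \<alpha> \<beta> Ahat = Astar" using a s Bf Bl lr by simp
    show "Astar = Bfun l r \<alpha> \<beta> Astar" using assms(8) by simp
    show "Bfun l r \<alpha> \<beta> Astar = l" using assms(8) s by simp
    show "l = r" by (fact lr)
  qed
qed

end
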